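(* Let $\mathcal{H}$ be a complex Hilbert space and let $R\in\mathbb{B}(\mathcal{H})$ be invertible (with bounded inverse). If $D(R)\le \|R^{-1}\|^{-2}$, then $\|R\|\le\sqrt{2}\,\omega(R)$.
   Context: $\mathbb{B}(\mathcal{H})$ denotes the bounded linear operators on $\mathcal{H}$. $\omega(R)=\sup\{|\langle Rx,x\rangle| : \|x\|=1\}$ is the numerical radius, $\|R\|$ the operator norm, and $D(R)=2\min(\|R_1\|^2,\|R_2\|^2)$ where $R_1=\frac{R+R^*}{2}$, $R_2=\frac{R-R^*}{2i}$. *)

theory Defs
  imports "HOL-Analysis.Analysis"
begin

text \<open>The inner product is linear in the first
  argument and conjugate-linear in the second; the norm is the one induced by it.\<close>

class complex_inner = real_normed_vector +
  fixes scaleC :: "complex \<Rightarrow> 'a \<Rightarrow> 'a" (infixr \<open>*\<^sub>C\<close> 75)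
    and cinner :: "'a \<Rightarrow> 'a \<Rightarrow> complex"
  assumes scaleC_add_right: "a *\<^sub>C (x + y) = a *\<^sub>C x + a *\<^sub>C y"
    and scaleC_add_left: "(a + b) *\<^sub>C x = a *\<^sub>C x + b *\<^sub>C x"
    and scaleC_scaleC: "a *\<^sub>C (b *\<^sub>C x) = (a * b) *\<^sub>C x"
    and scaleC_one: "1 *\<^sub>C x = x"
    and scaleR_scaleC: "scaleR r x = complex_of_real r *\<^sub>C x"
    and cinner_conj_commute: "cinner x y = cnj (cinner y x)"
    and cinner_add_left: "cinner (x + y) z = cinner x z + cinner y z"
    and cinner_scaleC_left: "cinner (a *\<^sub>C x) y = a * cinner x y"
    and cinner_self_eq_zero: "cinner x x = 0 \<longleftrightarrow> x = 0"
    and norm_eq_sqrt_cinner: "norm x = sqrt (Re (cinner x x))"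

class chilbert_space = complex_inner + complete_space

definition bounded_clinear :: "('a::complex_inner \<Rightarrow> 'b::complex_inner) \<Rightarrow> bool" where
  "bounded_clinear f \<longleftrightarrow>
     (\<forall>x y. f (x + y) = f x + f y) \<and> (\<forall>c x. f (c *\<^sub>C x) = c *\<^sub>C f x) \<and>
     (\<exists>K. \<forall>x. norm (f x) \<le> norm x * K)"

definition adjoint :: "('a::complex_inner \<Rightarrow> 'a) \<Rightarrow> ('a \<Rightarrow> 'a)" where
  "adjoint R = (SOME S. \<forall>x y. cinner (R x) y = cinner x (S y))"

definition numrad :: "('a::complex_inner \<Rightarrow> 'a) \<Rightarrow> real" where
  "numrad R = (SUP x\<in>{x. norm x = 1}. cmod (cinner (R x) x))"

definition re_part :: "('a::complex_inner \<Rightarrow> 'a) \<Rightarrow> ('a \<Rightarrow> 'a)" where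
  "re_part R = (\<lambda>x. (1/2) *\<^sub>C (R x + adjoint R x))"

definition im_part :: "('a::complex_inner \<Rightarrow> 'a) \<Rightarrow> ('a \<Rightarrow> 'a)" where
  "im_part R = (\<lambda>x. (1/(2*\<i>)) *\<^sub>C (R x - adjoint R x))"

definition Dfun :: "('a::complex_inner \<Rightarrow> 'a) \<Rightarrow> real" where
  "Dfun R = 2 * min ((onorm (re_part R))\<^sup>2) ((onorm (im_part R))\<^sup>2)"

end

theory Submission
  imports Defs
begin



lemma scaleC_zero_left[simp]: "0 *\<^sub>C x = 0"
proof -
  have "0 *\<^sub>C x = 0 *\<^sub>C x + 0 *\<^sub>C x" using scaleC_add_left[of 0 0 x] by simp
  then show ?thesis by simp
qed

lemma scaleC_zero_right[simp]: "c *\<^sub>C 0 = 0"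
proof -
  have "c *\<^sub>C 0 = c *\<^sub>C 0 + c *\<^sub>C 0" using scaleC_add_right[of c 0 0] by simp
  then show ?thesis by simp
qed

lemma scaleC_of_real: "complex_of_real r *\<^sub>C x = r *\<^sub>R x"
  by (simp add: scaleR_scaleC)

lemma scaleC_minus1: "(-1) *\<^sub>C x = - x"
proof -
  have "(-1) *\<^sub>C x = complex_of_real (-1) *\<^sub>C x" by simp
  also have "\<dots> = (-1) *\<^sub>R x" by (rule scaleC_of_real)
  finally show ?thesis by simp
qed

lemma scaleC_minus_right: "c *\<^sub>C (- x) = - (c *\<^sub>C x)"
proof -
  have "c *\<^sub>C (- x) = c *\<^sub>C ((-1) *\<^sub>C x)" by (simp add: scaleC_minus1)
  also have "\<dots> = (-1) *\<^sub>C (c *\<^sub>C x)" by (simp add: scaleC_scaleC)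
  finally show ?thesis by (simp add: scaleC_minus1)
qed

lemma scaleC_diff_right: "c *\<^sub>C (x - y) = c *\<^sub>C x - c *\<^sub>C y"
proof -
  have "c *\<^sub>C (x - y) = c *\<^sub>C (x + - y)" by simp
  also have "\<dots> = c *\<^sub>C x - c *\<^sub>C y" by (simp only: scaleC_add_right scaleC_minus_right) simp
  finally show ?thesis .
qed

lemma scaleC_diff_left: "(a - b) *\<^sub>C x = a *\<^sub>C x - b *\<^sub>C x"
proof -
  have "(a - b) *\<^sub>C x + b *\<^sub>C x = a *\<^sub>C x" by (metis scaleC_add_left diff_add_cancel)
  then show ?thesis by (metis add_diff_cancel)
qed

lemma cinner_zero_left[simp]: "cinner 0 y = 0"
  using cinner_add_left[of 0 0 y] by simp

lemma cinner_zero_right[simp]: "cinner x 0 = 0"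
  using cinner_conj_commute[of x 0] by simp

lemma cinner_add_right: "cinner x (y + z) = cinner x y + cinner x z"
  by (metis cinner_conj_commute cinner_add_left complex_cnj_add)

lemma cinner_scaleC_right: "cinner x (c *\<^sub>C y) = cnj c * cinner x y"
  by (metis cinner_conj_commute cinner_scaleC_left complex_cnj_mult)

lemma cinner_minus_left: "cinner (- x) y = - cinner x y"
  by (metis cinner_scaleC_left scaleC_minus1 mult_minus1)

lemma cinner_minus_right: "cinner x (- y) = - cinner x y"
  by (metis cinner_conj_commute cinner_minus_left complex_cnj_minus)

lemma cinner_diff_left: "cinner (x - y) z = cinner x z - cinner y z"
proof -
  have "cinner (x - y) z = cinner (x + - y) z" by simp
  also have "\<dots> = cinner x z - cinner y z" by (simp only: cinner_add_left cinner_minus_left) simp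
  finally show ?thesis .
qed

lemma cinner_diff_right: "cinner x (y - z) = cinner x y - cinner x z"
proof -
  have "cinner x (y - z) = cinner x (y + - z)" by simp
  also have "\<dots> = cinner x y - cinner x z" by (simp only: cinner_add_right cinner_minus_right) simp
  finally show ?thesis .
qed

lemma cinner_scaleR_left: "cinner (r *\<^sub>R x) y = complex_of_real r * cinner x y"
  by (simp add: scaleR_scaleC cinner_scaleC_left)

lemma cinner_scaleR_right: "cinner x (r *\<^sub>R y) = complex_of_real r * cinner x y"
  by (simp add: scaleR_scaleC cinner_scaleC_right)

lemma cinner_self: "cinner x x = complex_of_real ((norm x)\<^sup>2)"
proof -
  have im: "Im (cinner x x) = 0"
  proof -
    have "Im (cinner x x) = Im (cnj (cinner x x))" using cinner_conj_commute[of x x] by simp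
    then show ?thesis by simp
  qed
  have "norm x \<ge> 0" by simp
  then have re: "Re (cinner x x) \<ge> 0" using norm_eq_sqrt_cinner[of x] by simp
  have "(norm x)\<^sup>2 = Re (cinner x x)" using norm_eq_sqrt_cinner[of x] re by simp
  then show ?thesis using im by (simp add: complex_eq_iff)
qed

lemma norm_scaleC: "norm (c *\<^sub>C x) = cmod c * norm x"
proof -
  have "cinner (c *\<^sub>C x) (c *\<^sub>C x) = c * (cnj c * cinner x x)"
    by (simp only: cinner_scaleC_left cinner_scaleC_right mult.left_commute)
  then have e1: "complex_of_real ((norm (c *\<^sub>C x))\<^sup>2) = c * (cnj c * complex_of_real ((norm x)\<^sup>2))"
    by (simp only: cinner_self)
  have "c * (cnj c * complex_of_real ((norm x)\<^sup>2)) = complex_of_real ((cmod c)\<^sup>2) * complex_of_real ((norm x)\<^sup>2)"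
    by (metis mult.assoc complex_norm_square)
  also have "\<dots> = complex_of_real ((cmod c)\<^sup>2 * (norm x)\<^sup>2)" by (rule of_real_mult[symmetric])
  finally have "(norm (c *\<^sub>C x))\<^sup>2 = (cmod c)\<^sup>2 * (norm x)\<^sup>2" using e1 of_real_eq_iff by metis
  then have "(norm (c *\<^sub>C x))\<^sup>2 = (cmod c * norm x)\<^sup>2" by (simp only: power_mult_distrib)
  then show ?thesis by (rule power2_eq_imp_eq) auto
qed

lemma norm_add_sq: "(norm (x + y))\<^sup>2 = (norm x)\<^sup>2 + (norm y)\<^sup>2 + 2 * Re (cinner x y)"
proof -
  have "cinner (x+y) (x+y) = cinner x x + cinner y y + (cinner x y + cnj (cinner x y))"
    by (simp add: cinner_add_left cinner_add_right flip: cinner_conj_commute)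
  then have "Re (cinner (x+y) (x+y)) = Re (cinner x x) + Re (cinner y y) + 2 * Re (cinner x y)"
    by simp
  then show ?thesis by (simp add: cinner_self)
qed

lemma norm_diff_sq: "(norm (x - y))\<^sup>2 = (norm x)\<^sup>2 + (norm y)\<^sup>2 - 2 * Re (cinner x y)"
  using norm_add_sq[of x "- y"] by (simp add: cinner_minus_right)

lemma cinner_eqI: "(\<And>x. cinner x u = cinner x v) \<Longrightarrow> u = v"
proof -
  assume h: "\<And>x. cinner x u = cinner x v"
  have "cinner (u - v) (u - v) = 0" using h[of "u-v"] by (simp add: cinner_diff_right)
  then show "u = v" using cinner_self_eq_zero by (metis right_minus_eq)
qed

lemma cauchy_schwarz_Re: "Re (cinner x y) \<le> norm x * norm y"
proof (cases "x = 0 \<or> y = 0")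
  case True then show ?thesis by auto
next
  case False
  then have nx: "norm x > 0" and ny: "norm y > 0" by auto
  let ?u = "(1/norm x) *\<^sub>R x" and ?v = "(1/norm y) *\<^sub>R y"
  have nu: "norm ?u = 1" and nv: "norm ?v = 1" using nx ny by simp_all
  have ri: "Re (cinner ?u ?v) = Re (cinner x y) / (norm x * norm y)"
    by (simp add: cinner_scaleR_left cinner_scaleR_right)
  have "0 \<le> (norm (?u - ?v))\<^sup>2" by simp
  also have "\<dots> = 2 - 2 * (Re (cinner x y) / (norm x * norm y))"
    by (simp only: norm_diff_sq nu nv ri) simp
  finally have "Re (cinner x y) / (norm x * norm y) \<le> 1" by linarith
  then show ?thesis using nx ny by (simp add: pos_divide_le_eq)
qed

lemma cauchy_schwarz: "cmod (cinner x y) \<le> norm x * norm y"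
proof (cases "cinner x y = 0")
  case True then show ?thesis by simp
next
  case False
  define c where "c = cnj (cinner x y) / cmod (cinner x y)"
  have cm: "cmod c = 1" using False by (simp add: c_def norm_divide)
  have cc: "cnj (cinner x y) * cinner x y = complex_of_real ((cmod (cinner x y))\<^sup>2)"
    by (metis complex_norm_square mult.commute)
  have "cinner (c *\<^sub>C x) y = complex_of_real (cmod (cinner x y))"
    using False by (simp add: c_def cinner_scaleC_left cc power2_eq_square)
  then have "cmod (cinner x y) = Re (cinner (c *\<^sub>C x) y)" by simp
  also have "\<dots> \<le> norm (c *\<^sub>C x) * norm y" by (rule cauchy_schwarz_Re)
  finally show ?thesis using cm by (simp add: norm_scaleC)
qed




lemma parallelogram:
  fixes a b :: "'a::complex_inner"
  shows "(norm (a + b))\<^sup>2 + (norm (a - b))\<^sup>2 = 2 * (norm a)\<^sup>2 + 2 * (norm b)\<^sup>2"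
  by (simp add: norm_add_sq norm_diff_sq)

lemma Re_cinner_commute:
  fixes a b :: "'a::complex_inner"
  shows "Re (cinner a b) = Re (cinner b a)"
  by (metis cinner_conj_commute complex_cnj_cancel_iff cnj.sel(1))

lemma real_riesz:
  fixes f :: "'a::chilbert_space \<Rightarrow> real"
  assumes bl: "bounded_linear f"
  shows "\<exists>z. \<forall>x. f x = Re (cinner x z)"
proof (cases "\<forall>x. f x = 0")
  case True then show ?thesis by (intro exI[of _ 0]) simp
next
  case False
  interpret f: bounded_linear f by (rule bl)
  from False obtain u where fu: "f u \<noteq> 0" by auto
  define N where "N = {x. f x = 0}"
  have N0: "0 \<in> N" by (simp add: N_def f.zero)
  have Nadd: "a + b \<in> N" if "a \<in> N" "b \<in> N" for a b using that by (simp add: N_def f.add)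
  have Nscale: "c *\<^sub>R a \<in> N" if "a \<in> N" for a c using that by (simp add: N_def f.scale)
  define D where "D = (\<lambda>n. norm (u - n)) ` N"
  define d where "d = Inf D"
  have Dne: "D \<noteq> {}" using N0 by (auto simp: D_def)
  have Dbdd: "bdd_below D" by (auto simp: D_def bdd_below_def intro!: exI[of _ 0])
  have dle: "d \<le> norm (u - n)" if "n \<in> N" for n
    unfolding d_def D_def using Dbdd[unfolded D_def] that by (intro cInf_lower) auto
  have d0: "d \<ge> 0" using dle[OF N0] Dne Dbdd unfolding d_def D_def
    by (intro cInf_greatest) auto
  define e where "e = (\<lambda>k::nat. sqrt (d\<^sup>2 + inverse (real (Suc k))))"
  have "\<exists>n\<in>N. norm (u - n) < e k" for k
  proof -
    have "d = sqrt (d\<^sup>2)" using d0 by simp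
    also have "\<dots> < sqrt (d\<^sup>2 + inverse (real (Suc k)))" by (rule real_sqrt_less_mono) simp
    also have "\<dots> = e k" by (simp only: e_def)
    finally have "d < e k" .
    then have "Inf D < e k" by (simp add: d_def)
    then obtain y where "y \<in> D" "y < e k" using cInf_lessD[OF Dne] by blast
    then show ?thesis by (auto simp: D_def)
  qed
  then obtain n where nN: "\<And>k. n k \<in> N" and nlt: "\<And>k. norm (u - n k) < e k" by metis
  have nsq: "(norm (u - n k))\<^sup>2 \<le> d\<^sup>2 + inverse (real (Suc k))" for k
  proof -
    have "(norm (u - n k))\<^sup>2 \<le> (e k)\<^sup>2" using nlt[of k] by (intro power_mono) auto
    also have "\<dots> = d\<^sup>2 + inverse (real (Suc k))" unfolding e_def by simp
    finally show ?thesis .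
  qed
  have nclose: "(norm (n j - n k))\<^sup>2 \<le> 2 * inverse (real (Suc j)) + 2 * inverse (real (Suc k))" for j k
  proof -
    have mid: "(1/2) *\<^sub>R (n j + n k) \<in> N" by (intro Nscale Nadd nN)
    have eq1: "(u - n j) + (u - n k) = 2 *\<^sub>R (u - (1/2) *\<^sub>R (n j + n k))"
      by (simp add: algebra_simps scaleR_2)
    have eq2: "(u - n j) - (u - n k) = n k - n j" by simp
    have "(norm ((u - n j) + (u - n k)))\<^sup>2 = 4 * (norm (u - (1/2) *\<^sub>R (n j + n k)))\<^sup>2"
      unfolding eq1 by (simp add: power2_eq_square)
    moreover have "d\<^sup>2 \<le> (norm (u - (1/2) *\<^sub>R (n j + n k)))\<^sup>2"
      using dle[OF mid] d0 by (intro power_mono) auto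
    moreover have "(norm (n k - n j))\<^sup>2 = (norm (n j - n k))\<^sup>2" by (simp add: norm_minus_commute)
    ultimately show ?thesis
      using parallelogram[of "u - n j" "u - n k"] nsq[of j] nsq[of k] unfolding eq2 by linarith
  qed
  have "Cauchy n"
  proof (rule metric_CauchyI)
    fix eps :: real assume eps: "eps > 0"
    obtain M :: nat where M: "inverse (real (Suc M)) < eps\<^sup>2 / 4"
      using reals_Archimedean[of "eps\<^sup>2 / 4"] eps by auto
    show "\<exists>M. \<forall>m\<ge>M. \<forall>k\<ge>M. dist (n m) (n k) < eps"
    proof (intro exI allI impI)
      fix m k assume mk: "m \<ge> M" "k \<ge> M"
      have im: "inverse (real (Suc m)) \<le> inverse (real (Suc M))" using mk by (simp add: field_simps)
      have ik: "inverse (real (Suc k)) \<le> inverse (real (Suc M))" using mk by (simp add: field_simps)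
      have "(norm (n m - n k))\<^sup>2 < eps\<^sup>2" using nclose[of m k] im ik M by linarith
      then have "norm (n m - n k) < eps" using eps by (simp add: power_less_imp_less_base)
      then show "dist (n m) (n k) < eps" by (simp add: dist_norm)
    qed
  qed
  then obtain p where np: "n \<longlonglongrightarrow> p" using Cauchy_convergent_iff convergent_def by blast
  have "(\<lambda>k. f (n k)) \<longlonglongrightarrow> f p" by (rule f.tendsto[OF np])
  moreover have "(\<lambda>k. f (n k)) = (\<lambda>k. 0)" using nN by (auto simp: N_def)
  ultimately have "f p = 0" using LIMSEQ_unique tendsto_const by metis
  then have pN: "p \<in> N" by (simp add: N_def)
  have lim1: "(\<lambda>k. norm (u - n k)) \<longlonglongrightarrow> norm (u - p)" by (intro tendsto_intros np)
  have lim2: "e \<longlonglongrightarrow> sqrt (d\<^sup>2 + 0)" unfolding e_def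
    by (intro tendsto_intros LIMSEQ_inverse_real_of_nat)
  have "norm (u - p) \<le> sqrt (d\<^sup>2 + 0)"
    using lim1 lim2 by (rule LIMSEQ_le) (use nlt less_imp_le in blast)
  then have pmin: "norm (u - p) \<le> d" using d0 by simp
  define v where "v = u - p"
  have fv: "f v = f u" using \<open>f p = 0\<close> by (simp add: v_def f.diff)
  have orth: "Re (cinner v m) = 0" if mN: "m \<in> N" for m
  proof (cases "m = 0")
    case True then show ?thesis by simp
  next
    case False
    define t where "t = Re (cinner v m) / (norm m)\<^sup>2"
    have "p + t *\<^sub>R m \<in> N" by (intro Nadd Nscale pN mN)
    then have "d \<le> norm (u - (p + t *\<^sub>R m))" by (rule dle)
    then have "norm v \<le> norm (v - t *\<^sub>R m)" using pmin by (simp add: v_def algebra_simps)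
    then have "(norm v)\<^sup>2 \<le> (norm (v - t *\<^sub>R m))\<^sup>2" by (intro power_mono) auto
    also have "\<dots> = (norm v)\<^sup>2 + t\<^sup>2 * (norm m)\<^sup>2 - 2 * t * Re (cinner v m)"
      by (simp add: norm_diff_sq cinner_scaleR_right power_mult_distrib)
    finally have "0 \<le> t\<^sup>2 * (norm m)\<^sup>2 - 2 * t * Re (cinner v m)" by simp
    also have "\<dots> = - (Re (cinner v m))\<^sup>2 / (norm m)\<^sup>2"
      using False by (simp add: t_def field_simps power2_eq_square)
    finally have "(Re (cinner v m))\<^sup>2 \<le> 0" using False
      by (simp add: divide_le_0_iff)
    then show ?thesis by simp
  qed
  have v0: "v \<noteq> 0" using fv fu f.zero by auto
  define z where "z = (f v / (norm v)\<^sup>2) *\<^sub>R v"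
  show ?thesis
  proof (intro exI allI)
    fix x
    define w where "w = x - (f x / f v) *\<^sub>R v"
    have "f w = 0" using fu fv by (simp add: w_def f.diff f.scale)
    then have "Re (cinner v w) = 0" by (intro orth) (simp add: N_def)
    then have "Re (cinner w v) = 0" by (simp add: Re_cinner_commute)
    then have "Re (cinner x v) = (f x / f v) * (norm v)\<^sup>2"
      by (simp add: w_def cinner_diff_left cinner_scaleR_left cinner_self)
    then show "f x = Re (cinner x z)"
      using v0 fu fv by (simp add: z_def cinner_scaleR_right)
  qed
qed




lemma scaleC_minus_left: "(- c) *\<^sub>C x = - (c *\<^sub>C x)"
proof -
  have "(- c) *\<^sub>C x = (-1) *\<^sub>C (c *\<^sub>C x)" by (simp add: scaleC_scaleC)
  then show ?thesis by (simp only: scaleC_minus1)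
qed

lemma scaleC_scaleR_commute: "c *\<^sub>C (r *\<^sub>R x) = r *\<^sub>R (c *\<^sub>C x)"
  by (simp only: scaleR_scaleC scaleC_scaleC mult.commute)

lemma bcl_bl:
  assumes "bounded_clinear f" shows "bounded_linear f"
proof -
  from assms obtain K where add: "\<And>x y. f (x + y) = f x + f y"
    and sc: "\<And>c x. f (c *\<^sub>C x) = c *\<^sub>C f x" and b: "\<And>x. norm (f x) \<le> norm x * K"
    unfolding bounded_clinear_def by blast
  show ?thesis
  proof (rule bounded_linear_intro[where K=K])
    show "f (x + y) = f x + f y" for x y by (rule add)
    show "f (r *\<^sub>R x) = r *\<^sub>R f x" for r x by (simp only: scaleR_scaleC sc)
    show "norm (f x) \<le> norm x * K" for x by (rule b)
  qed
qed

lemma bcl_comb: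
  assumes f: "bounded_clinear f" and g: "bounded_clinear g"
  shows "bounded_clinear (\<lambda>x. c *\<^sub>C (f x + g x))" and "bounded_clinear (\<lambda>x. c *\<^sub>C (f x - g x))"
proof -
  from f obtain K1 where fadd: "\<And>x y. f (x + y) = f x + f y"
    and fsc: "\<And>c x. f (c *\<^sub>C x) = c *\<^sub>C f x" and fb: "\<And>x. norm (f x) \<le> norm x * K1"
    unfolding bounded_clinear_def by blast
  from g obtain K2 where gadd: "\<And>x y. g (x + y) = g x + g y"
    and gsc: "\<And>c x. g (c *\<^sub>C x) = c *\<^sub>C g x" and gb: "\<And>x. norm (g x) \<le> norm x * K2"
    unfolding bounded_clinear_def by blast
  have b1: "norm (c *\<^sub>C (f x + g x)) \<le> norm x * (cmod c * (K1 + K2))" for x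
  proof -
    have "norm (f x + g x) \<le> norm x * (K1 + K2)"
      using norm_triangle_ineq[of "f x" "g x"] fb[of x] gb[of x] by (simp add: distrib_left)
    then have "cmod c * norm (f x + g x) \<le> cmod c * (norm x * (K1 + K2))" by (rule mult_left_mono) simp
    then show ?thesis by (simp add: norm_scaleC mult_ac)
  qed
  have b2: "norm (c *\<^sub>C (f x - g x)) \<le> norm x * (cmod c * (K1 + K2))" for x
  proof -
    have "norm (f x - g x) \<le> norm x * (K1 + K2)"
      using norm_triangle_ineq4[of "f x" "g x"] fb[of x] gb[of x] by (simp add: distrib_left)
    then have "cmod c * norm (f x - g x) \<le> cmod c * (norm x * (K1 + K2))" by (rule mult_left_mono) simp
    then show ?thesis by (simp add: norm_scaleC mult_ac)
  qed
  show "bounded_clinear (\<lambda>x. c *\<^sub>C (f x + g x))"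
    unfolding bounded_clinear_def
  proof (intro conjI allI exI)
    fix x y show "c *\<^sub>C (f (x + y) + g (x + y)) = c *\<^sub>C (f x + g x) + c *\<^sub>C (f y + g y)"
      by (simp only: fadd gadd scaleC_add_right add_ac)
  next
    fix d x show "c *\<^sub>C (f (d *\<^sub>C x) + g (d *\<^sub>C x)) = d *\<^sub>C c *\<^sub>C (f x + g x)"
      by (simp only: fsc gsc scaleC_add_right scaleC_scaleC mult.commute)
  next
    fix x show "norm (c *\<^sub>C (f x + g x)) \<le> norm x * (cmod c * (K1 + K2))" by (rule b1)
  qed
  show "bounded_clinear (\<lambda>x. c *\<^sub>C (f x - g x))"
    unfolding bounded_clinear_def
  proof (intro conjI allI exI)
    fix x y show "c *\<^sub>C (f (x + y) - g (x + y)) = c *\<^sub>C (f x - g x) + c *\<^sub>C (f y - g y)"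
      by (simp only: fadd gadd scaleC_diff_right scaleC_add_right) (simp add: algebra_simps)
  next
    fix d x show "c *\<^sub>C (f (d *\<^sub>C x) - g (d *\<^sub>C x)) = d *\<^sub>C c *\<^sub>C (f x - g x)"
      by (simp only: fsc gsc scaleC_diff_right scaleC_scaleC mult.commute)
  next
    fix x show "norm (c *\<^sub>C (f x - g x)) \<le> norm x * (cmod c * (K1 + K2))" by (rule b2)
  qed
qed

lemma adjoint_exists:
  fixes R :: "'a::chilbert_space \<Rightarrow> 'a"
  assumes bcl: "bounded_clinear R"
  shows "\<exists>S. \<forall>x y. cinner (R x) y = cinner x (S y)"
proof -
  from bcl obtain K where Radd: "\<And>x y. R (x + y) = R x + R y"
    and Rsc: "\<And>c x. R (c *\<^sub>C x) = c *\<^sub>C R x" and Rb: "\<And>x. norm (R x) \<le> norm x * K"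
    unfolding bounded_clinear_def by blast
  have "\<exists>z. \<forall>x. Re (cinner (R x) y) = Re (cinner x z)" for y
  proof (rule real_riesz)
    show "bounded_linear (\<lambda>x. Re (cinner (R x) y))"
    proof (rule bounded_linear_intro[where K="K * norm y"])
      show "Re (cinner (R (x + x')) y) = Re (cinner (R x) y) + Re (cinner (R x') y)" for x x'
        by (simp add: Radd cinner_add_left)
      show "Re (cinner (R (r *\<^sub>R x)) y) = r *\<^sub>R Re (cinner (R x) y)" for r x
        by (simp add: scaleR_scaleC Rsc cinner_scaleC_left)
      show "norm (Re (cinner (R x) y)) \<le> norm x * (K * norm y)" for x
      proof -
        have "norm (Re (cinner (R x) y)) \<le> cmod (cinner (R x) y)" by (simp add: abs_Re_le_cmod)
        also have "\<dots> \<le> norm (R x) * norm y" by (rule cauchy_schwarz)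
        also have "\<dots> \<le> norm x * K * norm y" using Rb[of x] by (simp add: mult_right_mono)
        finally show ?thesis by (simp add: mult.assoc)
      qed
    qed
  qed
  then obtain S where hS: "\<And>x y. Re (cinner (R x) y) = Re (cinner x (S y))" by metis
  have "cinner (R x) y = cinner x (S y)" for x y
  proof (rule complex_eqI)
    show "Re (cinner (R x) y) = Re (cinner x (S y))" by (rule hS)
    have "Re (cinner (R (\<i> *\<^sub>C x)) y) = Re (cinner (\<i> *\<^sub>C x) (S y))" by (rule hS)
    then show "Im (cinner (R x) y) = Im (cinner x (S y))"
      by (simp add: Rsc cinner_scaleC_left)
  qed
  then show ?thesis by blast
qed

lemma adjoint_prop:
  fixes R :: "'a::chilbert_space \<Rightarrow> 'a"
  assumes "bounded_clinear R"
  shows "cinner (R x) y = cinner x (adjoint R y)"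
proof -
  have "\<exists>S. \<forall>x y. cinner (R x) y = cinner x (S y)" by (rule adjoint_exists[OF assms])
  then have "\<forall>x y. cinner (R x) y = cinner x (adjoint R y)"
    unfolding adjoint_def by (rule someI_ex)
  then show ?thesis by blast
qed

lemma adjoint_bcl:
  fixes R S :: "'a::complex_inner \<Rightarrow> 'a"
  assumes bcl: "bounded_clinear R" and hS: "\<And>x y. cinner (R x) y = cinner x (S y)"
  shows "bounded_clinear S"
proof -
  from bcl obtain K where Radd: "\<And>x y. R (x + y) = R x + R y"
    and Rsc: "\<And>c x. R (c *\<^sub>C x) = c *\<^sub>C R x" and Rb: "\<And>x. norm (R x) \<le> norm x * K"
    unfolding bounded_clinear_def by blast
  have sadd: "S (x + y) = S x + S y" for x y
    by (rule cinner_eqI) (simp add: cinner_add_right flip: hS)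
  have ssc: "S (c *\<^sub>C x) = c *\<^sub>C S x" for c x
    by (rule cinner_eqI) (simp add: cinner_scaleC_right flip: hS)
  have sb: "norm (S y) \<le> norm y * K" for y
  proof (cases "S y = 0")
    case True
    have "0 \<le> norm y * K"
    proof (cases "y = 0")
      case False
      show ?thesis using Rb[of y] norm_ge_zero[of "R y"] by linarith
    qed simp
    then show ?thesis using True by simp
  next
    case False
    have "(norm (S y))\<^sup>2 = Re (cinner (S y) (S y))" by (simp add: cinner_self)
    also have "\<dots> = Re (cinner (R (S y)) y)" by (simp add: hS)
    also have "\<dots> \<le> norm (R (S y)) * norm y" by (rule cauchy_schwarz_Re)
    also have "\<dots> \<le> norm (S y) * K * norm y" using Rb[of "S y"] by (simp add: mult_right_mono)
    finally have "norm (S y) * norm (S y) \<le> norm (S y) * (norm y * K)"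
      by (simp add: power2_eq_square mult_ac)
    then show ?thesis using False by simp
  qed
  show ?thesis unfolding bounded_clinear_def using sadd ssc sb by blast
qed




lemma part_bound:
  fixes T T' :: "'a::complex_inner \<Rightarrow> 'a"
  assumes add: "\<And>x y. T (x + y) = T x + T y" and diff: "\<And>x y. T (x - y) = T x - T y"
    and adj: "\<And>x y. cinner (T x) y = cinner x (T' y)"
    and W: "\<And>x. \<bar>Re (cinner (T x) x)\<bar> \<le> W * (norm x)\<^sup>2" and W0: "W \<ge> 0"
  shows "norm ((1/2) *\<^sub>C (T x + T' x)) \<le> W * norm x"
proof -
  define A where "A x = (1/2) *\<^sub>C (T x + T' x)" for x
  have T0: "T 0 = 0" using add[of 0 0] by simp
  have T'0: "T' 0 = 0" by (rule cinner_eqI) (simp add: flip: adj)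
  have h1: "Re (cinner (A x) y) = (Re (cinner (T x) y) + Re (cinner (T y) x)) / 2" for x y
  proof -
    have "cinner (T' x) y = cnj (cinner (T y) x)" by (metis adj cinner_conj_commute)
    then show ?thesis by (simp add: A_def cinner_scaleC_left cinner_add_left)
  qed
  have h2: "Re (cinner (T (x+y)) (x+y)) = Re (cinner (T x) x) + Re (cinner (T y) y) + Re (cinner (T x) y) + Re (cinner (T y) x)" for x y
    by (simp add: add cinner_add_left cinner_add_right)
  have h3: "Re (cinner (T (x-y)) (x-y)) = Re (cinner (T x) x) + Re (cinner (T y) y) - Re (cinner (T x) y) - Re (cinner (T y) x)" for x y
    by (simp add: diff cinner_diff_left cinner_diff_right)
  have key: "Re (cinner (A x) y) \<le> W * ((norm x)\<^sup>2 + (norm y)\<^sup>2) / 2" for x y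
  proof -
    have "Re (cinner (A x) y) = (Re (cinner (T (x+y)) (x+y)) - Re (cinner (T (x-y)) (x-y))) / 4"
      by (simp only: h1 h2 h3) (simp add: field_simps)
    also have "\<dots> \<le> (W * (norm (x+y))\<^sup>2 + W * (norm (x-y))\<^sup>2) / 4"
      using W[of "x+y"] W[of "x-y"] by (simp add: abs_le_iff)
    also have "\<dots> = W * ((norm (x+y))\<^sup>2 + (norm (x-y))\<^sup>2) / 4" by (simp add: distrib_left)
    also have "\<dots> = W * ((norm x)\<^sup>2 + (norm y)\<^sup>2) / 2" using parallelogram[of x y] by simp
    finally show ?thesis .
  qed
  show ?thesis
  proof (cases "A x = 0")
    case True then show ?thesis using W0 by (simp add: A_def)
  next
    case False
    then have x0: "x \<noteq> 0" by (auto simp: A_def T0 T'0)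
    define y where "y = (norm x / norm (A x)) *\<^sub>R A x"
    have ny: "norm y = norm x" using False by (simp add: y_def)
    have "Re (cinner (A x) y) = norm x / norm (A x) * (norm (A x))\<^sup>2"
      by (simp add: y_def cinner_scaleR_right cinner_self)
    also have "\<dots> = norm x * norm (A x)" using False by (simp add: power2_eq_square)
    finally have "norm x * norm (A x) \<le> W * ((norm x)\<^sup>2 + (norm x)\<^sup>2) / 2" using key[of x y] ny by simp
    then have "norm x * norm (A x) \<le> norm x * (W * norm x)" by (simp add: power2_eq_square mult_ac)
    then have "norm (A x) \<le> W * norm x" using x0 by simp
    then show ?thesis by (simp add: A_def)
  qed
qed

lemma numrad_bdd:
  fixes R :: "'a::complex_inner \<Rightarrow> 'a"
  assumes bl: "bounded_linear R"
  shows "bdd_above ((\<lambda>x. cmod (cinner (R x) x)) ` {x. norm x = 1})"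
proof -
  interpret R: bounded_linear R by (rule bl)
  obtain K where K: "\<And>x. norm (R x) \<le> norm x * K" using R.bounded by blast
  have "cmod (cinner (R x) x) \<le> K" if "norm x = 1" for x
  proof -
    have "cmod (cinner (R x) x) \<le> norm (R x) * norm x" by (rule cauchy_schwarz)
    also have "\<dots> \<le> K" using K[of x] that by simp
    finally show ?thesis .
  qed
  then show ?thesis unfolding bdd_above_def by blast
qed

lemma numrad_upper:
  fixes R :: "'a::complex_inner \<Rightarrow> 'a"
  assumes bl: "bounded_linear R" and "norm x = 1"
  shows "cmod (cinner (R x) x) \<le> numrad R"
  unfolding numrad_def using numrad_bdd[OF bl] assms(2) by (intro cSUP_upper) auto

lemma numrad_bound:
  fixes R :: "'a::complex_inner \<Rightarrow> 'a"
  assumes bl: "bounded_linear R"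
  shows "cmod (cinner (R x) x) \<le> numrad R * (norm x)\<^sup>2"
proof (cases "x = 0")
  case True
  interpret R: bounded_linear R by (rule bl)
  show ?thesis using True by (simp add: R.zero)
next
  case False
  interpret R: bounded_linear R by (rule bl)
  define u where "u = (1 / norm x) *\<^sub>R x"
  have nu: "norm u = 1" using False by (simp add: u_def)
  have "cinner (R u) u = complex_of_real (1 / (norm x)\<^sup>2) * cinner (R x) x"
    by (simp add: u_def R.scale cinner_scaleR_left cinner_scaleR_right power2_eq_square)
  then have "cmod (cinner (R u) u) = cmod (cinner (R x) x) / (norm x)\<^sup>2"
    by (simp add: norm_divide norm_power)
  then have "cmod (cinner (R x) x) / (norm x)\<^sup>2 \<le> numrad R" using numrad_upper[OF bl nu] by simp
  then show ?thesis using False by (simp add: pos_divide_le_eq)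
qed

lemma numrad_nonneg:
  fixes R :: "'a::complex_inner \<Rightarrow> 'a"
  assumes bl: "bounded_linear R" and ex: "\<exists>x::'a. x \<noteq> 0"
  shows "0 \<le> numrad R"
proof -
  from ex obtain x :: 'a where "x \<noteq> 0" by blast
  then have "norm ((1 / norm x) *\<^sub>R x) = 1" by simp
  from numrad_upper[OF bl this] show ?thesis by (meson norm_ge_zero order_trans)
qed




theorem corollary2p3:
  fixes R :: "'a::chilbert_space \<Rightarrow> 'a"
  assumes nontriv: "\<exists>x::'a. x \<noteq> 0"
    and bdd: "bounded_clinear R"
    and invertible: "bij R"
    and inv_bdd: "bounded_clinear (inv R)"
    and hD: "Dfun R \<le> 1 / (onorm (inv R))\<^sup>2"
  shows "onorm R \<le> sqrt 2 * numrad R"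
proof -
  have blR: "bounded_linear R" by (rule bcl_bl[OF bdd])
  interpret R: bounded_linear R by (rule blR)
  define S where "S = adjoint R"
  have hS: "\<And>x y. cinner (R x) y = cinner x (S y)" unfolding S_def by (rule adjoint_prop[OF bdd])
  have bclS: "bounded_clinear S" by (rule adjoint_bcl[OF bdd hS])
  define W where "W = numrad R"
  have W0: "0 \<le> W" unfolding W_def by (rule numrad_nonneg[OF blR nontriv])
  have Wb: "\<And>x. cmod (cinner (R x) x) \<le> W * (norm x)\<^sup>2" unfolding W_def by (rule numrad_bound[OF blR])
  have R1eq: "re_part R = (\<lambda>x. (1/2) *\<^sub>C (R x + S x))" unfolding re_part_def S_def ..
  have R2eq: "im_part R = (\<lambda>x. (1/(2*\<i>)) *\<^sub>C (R x - S x))" unfolding im_part_def S_def ..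
  have bl1: "bounded_linear (re_part R)" unfolding R1eq by (rule bcl_bl[OF bcl_comb(1)[OF bdd bclS]])
  have bl2: "bounded_linear (im_part R)" unfolding R2eq by (rule bcl_bl[OF bcl_comb(2)[OF bdd bclS]])
  define a where "a = onorm (re_part R)"
  define b where "b = onorm (im_part R)"
  define ni where "ni = onorm (inv R)"
  have a0: "0 \<le> a" unfolding a_def by (rule onorm_pos_le[OF bl1])
  have b0: "0 \<le> b" unfolding b_def by (rule onorm_pos_le[OF bl2])
  have ni0: "0 \<le> ni" unfolding ni_def by (rule onorm_pos_le[OF bcl_bl[OF inv_bdd]])
  have aW: "a \<le> W" unfolding a_def
  proof (rule onorm_bound[OF W0])
    fix x
    have "norm ((1/2) *\<^sub>C (R x + S x)) \<le> W * norm x"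
    proof (rule part_bound[where T=R and T'=S])
      show "R (x + y) = R x + R y" for x y by (rule R.add)
      show "R (x - y) = R x - R y" for x y by (rule R.diff)
      show "cinner (R x) y = cinner x (S y)" for x y by (rule hS)
      show "\<bar>Re (cinner (R x) x)\<bar> \<le> W * (norm x)\<^sup>2" for x
        using abs_Re_le_cmod[of "cinner (R x) x"] Wb[of x] by linarith
    qed (rule W0)
    then show "norm (re_part R x) \<le> W * norm x" by (simp add: R1eq)
  qed
  have bW: "b \<le> W" unfolding b_def
  proof (rule onorm_bound[OF W0])
    fix x
    have "norm ((1/2) *\<^sub>C ((-\<i>) *\<^sub>C R x + \<i> *\<^sub>C S x)) \<le> W * norm x"
    proof (rule part_bound[where T="\<lambda>x. (-\<i>) *\<^sub>C R x" and T'="\<lambda>x. \<i> *\<^sub>C S x"])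
      show "(-\<i>) *\<^sub>C R (x + y) = (-\<i>) *\<^sub>C R x + (-\<i>) *\<^sub>C R y" for x y
        by (simp add: R.add scaleC_add_right)
      show "(-\<i>) *\<^sub>C R (x - y) = (-\<i>) *\<^sub>C R x - (-\<i>) *\<^sub>C R y" for x y
        by (simp add: R.diff scaleC_diff_right)
      show "cinner ((-\<i>) *\<^sub>C R x) y = cinner x (\<i> *\<^sub>C S y)" for x y
        by (simp add: cinner_scaleC_left cinner_scaleC_right hS)
      show "\<bar>Re (cinner ((-\<i>) *\<^sub>C R x) x)\<bar> \<le> W * (norm x)\<^sup>2" for x
        using abs_Im_le_cmod[of "cinner (R x) x"] Wb[of x] by (simp add: cinner_scaleC_left)
    qed (rule W0)
    moreover have "(1/2) *\<^sub>C ((-\<i>) *\<^sub>C R x + \<i> *\<^sub>C S x) = im_part R x"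
    proof -
      have c1: "(1/(2*\<i>)::complex) = 1/2 * (-\<i>)" by (simp add: field_simps)
      have c2: "- (1/2 * (-\<i>)::complex) = 1/2 * \<i>" by simp
      have "im_part R x = (1/(2*\<i>)) *\<^sub>C R x + (- (1/(2*\<i>))) *\<^sub>C S x"
        by (simp only: R2eq scaleC_diff_right scaleC_minus_left) simp
      also have "\<dots> = (1/2) *\<^sub>C ((-\<i>) *\<^sub>C R x + \<i> *\<^sub>C S x)"
        by (simp only: c1 c2 scaleC_add_right scaleC_scaleC)
      finally show ?thesis by simp
    qed
    ultimately show "norm (im_part R x) \<le> W * norm x" by simp
  qed
  have nR1: "norm (re_part R x) = norm (R x + S x) / 2" for x
    by (simp add: R1eq norm_scaleC)
  have nR2: "norm (im_part R x) = norm (R x - S x) / 2" for x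
    by (simp add: R2eq norm_scaleC norm_divide norm_mult)
  have P1: "(norm (R x))\<^sup>2 + (norm (S x))\<^sup>2 = 2 * ((norm (re_part R x))\<^sup>2 + (norm (im_part R x))\<^sup>2)" for x
    using parallelogram[of "R x" "S x"] by (simp add: nR1 nR2 power_divide)
  have P2a: "(norm (re_part R x))\<^sup>2 \<le> a\<^sup>2 * (norm x)\<^sup>2" for x
  proof -
    have "norm (re_part R x) \<le> a * norm x" unfolding a_def by (rule onorm[OF bl1])
    then have "(norm (re_part R x))\<^sup>2 \<le> (a * norm x)\<^sup>2" by (intro power_mono) auto
    then show ?thesis by (simp add: power_mult_distrib)
  qed
  have P2b: "(norm (im_part R x))\<^sup>2 \<le> b\<^sup>2 * (norm x)\<^sup>2" for x
  proof -
    have "norm (im_part R x) \<le> b * norm x" unfolding b_def by (rule onorm[OF bl2])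
    then have "(norm (im_part R x))\<^sup>2 \<le> (b * norm x)\<^sup>2" by (intro power_mono) auto
    then show ?thesis by (simp add: power_mult_distrib)
  qed
  have RinvR: "R (inv R x) = x" for x by (rule surj_f_inv_f[OF bij_is_surj[OF invertible]])
  have P3: "(norm x)\<^sup>2 \<le> ni * norm x * norm (S x)" for x
  proof -
    have "(norm x)\<^sup>2 = Re (cinner (R (inv R x)) x)" by (simp add: RinvR cinner_self)
    also have "\<dots> = Re (cinner (inv R x) (S x))" by (simp add: hS)
    also have "\<dots> \<le> norm (inv R x) * norm (S x)" by (rule cauchy_schwarz_Re)
    also have "\<dots> \<le> ni * norm x * norm (S x)"
      unfolding ni_def by (intro mult_right_mono onorm[OF bcl_bl[OF inv_bdd]]) simp
    finally show ?thesis .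
  qed
  have nipos: "0 < ni"
  proof (rule ccontr)
    assume "\<not> 0 < ni"
    then have "ni = 0" using ni0 by simp
    from nontriv obtain x0 :: 'a where "x0 \<noteq> 0" by blast
    then show False using P3[of x0] \<open>ni = 0\<close> by simp
  qed
  have P4: "(norm x)\<^sup>2 / ni\<^sup>2 \<le> (norm (S x))\<^sup>2" for x
  proof -
    have "norm x \<le> ni * norm (S x)"
    proof (cases "x = 0")
      case True then show ?thesis using ni0 by simp
    next
      case False
      then have "norm x * norm x \<le> norm x * (ni * norm (S x))"
        using P3[of x] by (simp add: power2_eq_square mult_ac)
      then show ?thesis using False by simp
    qed
    then have "norm x / ni \<le> norm (S x)" using nipos by (simp add: pos_divide_le_eq mult.commute)
    then have "(norm x / ni)\<^sup>2 \<le> (norm (S x))\<^sup>2" by (intro power_mono) (use nipos in auto)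
    then show ?thesis by (simp add: power_divide)
  qed
  have hD': "2 * min (a\<^sup>2) (b\<^sup>2) \<le> 1 / ni\<^sup>2" using hD unfolding Dfun_def a_def b_def ni_def .
  have mainx: "norm (R x) \<le> sqrt 2 * W * norm x" for x
  proof -
    define X where "X = (norm x)\<^sup>2"
    have X0: "0 \<le> X" by (simp add: X_def)
    define Q where "Q = X / ni\<^sup>2"
    have m: "2 * (min (a\<^sup>2) (b\<^sup>2) * X) \<le> Q"
      using mult_right_mono[OF hD' X0] by (simp add: Q_def)
    have q: "Q \<le> (norm (S x))\<^sup>2" using P4[of x] by (simp add: Q_def X_def)
    have p2a: "(norm (re_part R x))\<^sup>2 \<le> a\<^sup>2 * X" using P2a[of x] by (simp add: X_def)
    have p2b: "(norm (im_part R x))\<^sup>2 \<le> b\<^sup>2 * X" using P2b[of x] by (simp add: X_def)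
    have mm: "a\<^sup>2 * X + b\<^sup>2 * X = max (a\<^sup>2) (b\<^sup>2) * X + min (a\<^sup>2) (b\<^sup>2) * X"
      by (cases "a\<^sup>2 \<le> b\<^sup>2") (simp_all add: max_def min_def)
    have aW2: "a\<^sup>2 \<le> W\<^sup>2" using aW a0 by (intro power_mono) auto
    have bW2: "b\<^sup>2 \<le> W\<^sup>2" using bW b0 by (intro power_mono) auto
    have mx: "max (a\<^sup>2) (b\<^sup>2) * X \<le> W\<^sup>2 * X" using aW2 bW2 X0 by (intro mult_right_mono) auto
    have "(norm (R x))\<^sup>2 \<le> 2 * (a\<^sup>2 * X) + 2 * (b\<^sup>2 * X) - Q"
      using P1[of x] p2a p2b q by (smt (verit))
    then have "(norm (R x))\<^sup>2 \<le> 2 * W\<^sup>2 * X" using m mm mx by linarith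
    also have "\<dots> = (sqrt 2 * W * norm x)\<^sup>2" by (simp add: X_def power_mult_distrib)
    finally show ?thesis by (rule power2_le_imp_le) (use W0 in simp)
  qed
  have "onorm R \<le> sqrt 2 * W"
    by (rule onorm_bound) (use W0 mainx in auto)
  then show ?thesis by (simp add: W_def)
qed


end
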